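(* Assume the setting described in the context. The map $\pi:\Sigma_d\to J_f$ is surjective.
   Context: Setting: $U\subset\mathbb{C}$ is a domain conformally isomorphic to $\mathbb{D}$; $U'=U_1\cup\dots\cup U_N$ is relatively compact in $U$, with the $U_i$ pairwise disjoint domains each conformally isomorphic to $\mathbb{D}$; $f:U'\to U$ is a proper holomorphic map of degree $d>1$ (sum of the degrees of $f:U_i\to U$); $K_f=\{z\in U': f^n(z)\in U'\ \forall n\}$, $J_f=\partial K_f$, and it is assumed that $K_f=J_f$ is a Cantor set containing all critical points of $f$. Fix $w\in U\setminus U'$, let $w_0,\dots,w_{d-1}$ be its $d$ distinct preimages under $f$, and let $i(j)$ be defined by $w_j\in U_{i(j)}$. Let $\phi:\mathbb{D}\to U\setminus J_f$ be a universal covering with $\phi(0)=w$, and let $\Gamma$ be its deck transformation group. For each $i$ fix a connected component $V_i$ of $\phi^{-1}(U_i\setminus J_f)$, and let $g_0,\dots,g_{d-1}:\mathbb{D}\to\mathbb{D}$ be univalent holomorphic maps with $f\circ\phi\circ g_j=\phi$, $\phi(g_j(0))=w_j$ and $g_j(\mathbb{D})=V_{i(j)}$. $\Sigma_d=\{0,\dots,d-1\}^{\mathbb{N}}$ with product topology; $\Sigma_d^k=\{0,\dots,d-1\}^k$; for $\underline\epsilon=(\epsilon_1,\epsilon_2,\dots)\in\Sigma_d$, $\epsilon^k=(\epsilon_1,\dots,\epsilon_k)$; $\sigma$ is the shift, acting on blocks by $\sigma(\epsilon^k)=(\epsilon_2,\dots,\epsilon_k)$. Fix families $\{\gamma_l^{\epsilon^k}\}_{l=1}^k\subset\Gamma$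 and put $V_{\epsilon^k}=\gamma_1^{\epsilon^k}\circ g_{\epsilon_1}\circ\dots\circ\gamma_k^{\epsilon^k}\circ g_{\epsilon_k}(\mathbb{D})$, such that: (1) $V_{\epsilon^k}\subset V_{\epsilon^{k-1}}$ for $k\ge2$; (2) $\gamma_l^{\epsilon^k}=\gamma_{l-1}^{\sigma(\epsilon^k)}$ for $k\ge2$, $2\le l\le k$; (3) $\phi(V_{\epsilon^k})=\phi(V_{\widehat\epsilon^k})$ implies $V_{\epsilon^k}=V_{\widehat\epsilon^k}$ (such families exist). Define $\pi(\underline\epsilon)$ as the unique point of $\bigcap_{k\ge1}\overline{\phi(V_{\epsilon^k})}$; $\pi$ is continuous and satisfies $\pi\circ\sigma=f\circ\pi$. *)

theory Defs
  imports "HOL-Complex_Analysis.Complex_Analysis"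
begin

abbreviation disc :: "complex set" where "disc \<equiv> ball 0 1"

definition conformal_disc :: "complex set \<Rightarrow> bool" where
  "conformal_disc S \<longleftrightarrow> open S \<and> connected S \<and>
     (\<exists>h k. h holomorphic_on S \<and> k holomorphic_on disc \<and> h ` S \<subseteq> disc \<and> k ` disc \<subseteq> S \<and>
            (\<forall>z\<in>S. k (h z) = z) \<and> (\<forall>z\<in>disc. h (k z) = z))"

definition holo_degree :: "(complex \<Rightarrow> complex) \<Rightarrow> complex set \<Rightarrow> complex set \<Rightarrow> nat \<Rightarrow> bool" where
  "holo_degree f A B n \<longleftrightarrow>
     (\<forall>y\<in>B. finite {z\<in>A. f z = y} \<and> (\<Sum>z\<in>{z\<in>A. f z = y}. zorder (\<lambda>x. f x - y) z) = int n)"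

definition filled_julia :: "(complex \<Rightarrow> complex) \<Rightarrow> complex set \<Rightarrow> complex set" where
  "filled_julia f U' = {z \<in> U'. \<forall>n. (f ^^ n) z \<in> U'}"

definition cantor_set :: "complex set \<Rightarrow> bool" where
  "cantor_set S \<longleftrightarrow> S \<noteq> {} \<and> compact S \<and> (\<forall>x\<in>S. x islimpt S) \<and>
     (\<forall>C. C \<subseteq> S \<longrightarrow> connected C \<longrightarrow> (\<exists>a. C \<subseteq> {a}))"

definition deck :: "(complex \<Rightarrow> complex) \<Rightarrow> (complex \<Rightarrow> complex) set" where
  "deck \<phi> = {\<gamma>. (\<exists>\<gamma>'. homeomorphism disc disc \<gamma> \<gamma>') \<and> (\<forall>z\<in>disc. \<phi> (\<gamma> z) = \<phi> z)}"

text \<open>Blocks eps^k = [eps_1,...,eps_k] are lists; G e l is gamma_l^e (1 \<le> l \<le> length e).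
  block_map G g e = gamma_1^e o g_{eps_1} o ... o gamma_k^e o g_{eps_k}.\<close>
definition block_map :: "(nat list \<Rightarrow> nat \<Rightarrow> complex \<Rightarrow> complex) \<Rightarrow> (nat \<Rightarrow> complex \<Rightarrow> complex)
     \<Rightarrow> nat list \<Rightarrow> complex \<Rightarrow> complex" where
  "block_map G g e = foldr (\<lambda>l h. G e l \<circ> g (e ! (l - 1)) \<circ> h) [1..<Suc (length e)] id"

definition Vblock :: "(nat list \<Rightarrow> nat \<Rightarrow> complex \<Rightarrow> complex) \<Rightarrow> (nat \<Rightarrow> complex \<Rightarrow> complex)
     \<Rightarrow> nat list \<Rightarrow> complex set" where
  "Vblock G g e = block_map G g e ` disc"

text \<open>Sigma_d^k as lists, Sigma_d as sequences indexed from 0 (eps 0 = epsilon_1).\<close>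
definition blocks :: "nat \<Rightarrow> nat \<Rightarrow> nat list set" where
  "blocks d k = {e. length e = k \<and> (\<forall>x\<in>set e. x < d)}"

definition seqs :: "nat \<Rightarrow> (nat \<Rightarrow> nat) set" where
  "seqs d = {\<epsilon>. \<forall>n. \<epsilon> n < d}"

definition prefix_block :: "(nat \<Rightarrow> nat) \<Rightarrow> nat \<Rightarrow> nat list" where
  "prefix_block \<epsilon> k = map \<epsilon> [0..<k]"

definition coding_map :: "(complex \<Rightarrow> complex) \<Rightarrow> (nat list \<Rightarrow> nat \<Rightarrow> complex \<Rightarrow> complex)
     \<Rightarrow> (nat \<Rightarrow> complex \<Rightarrow> complex) \<Rightarrow> (nat \<Rightarrow> nat) \<Rightarrow> complex" where
  "coding_map \<phi> G g \<epsilon> = (THE x. x \<in> (\<Inter>k\<in>{1..}. closure (\<phi> ` Vblock G g (prefix_block \<epsilon> k))))"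

end

theory Submission imports Defs begin

lemma koenig:
  fixes Q :: "nat list \<Rightarrow> bool" and d :: nat
  assumes ex: "\<And>k. k \<ge> 1 \<Longrightarrow> \<exists>e. length e = k \<and> Q e"
    and tk: "\<And>e m. Q e \<Longrightarrow> 1 \<le> m \<Longrightarrow> m \<le> length e \<Longrightarrow> Q (take m e)"
    and st: "\<And>e. Q e \<Longrightarrow> set e \<subseteq> {..<d}"
  shows "\<exists>\<epsilon>. (\<forall>n. \<epsilon> n < d) \<and> (\<forall>k\<ge>1. Q (map \<epsilon> [0..<k]))"
proof -
  define good where "good e \<longleftrightarrow> (\<forall>m \<ge> max 1 (length e). \<exists>e'. length e' = m \<and> Q e' \<and> take (length e) e' = e)" for e
  have g0: "good []" unfolding good_def using ex by auto
  have gs: "\<exists>j<d. good (e @ [j])" if ge: "good e" for e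
  proof -
    have "\<forall>m. \<exists>e'. length e' = m + max 1 (length e + 1) \<and> Q e' \<and> take (length e) e' = e"
      using ge unfolding good_def by auto
    then obtain E where E: "\<And>m. length (E m) = m + max 1 (length e + 1) \<and> Q (E m) \<and> take (length e) (E m) = e"
      by metis
    define jj where "jj m = E m ! length e" for m
    have jjd: "jj m < d" for m
    proof -
      have "length e < length (E m)" using E[of m] by auto
      then have "E m ! length e \<in> set (E m)" by simp
      moreover have "set (E m) \<subseteq> {..<d}" using st[of "E m"] E[of m] by blast
      ultimately show ?thesis unfolding jj_def by blast
    qed
    have "\<exists>j<d. \<forall>m. \<exists>m'\<ge>m. jj m' = j"
    proof (rule ccontr)
      assume "\<not> ?thesis"
      then have "\<forall>j. \<exists>M. j < d \<longrightarrow> (\<forall>m'\<ge>M. jj m' \<noteq> j)" by blast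
      then obtain Mj where Mj: "\<And>j m'. j < d \<Longrightarrow> m' \<ge> Mj j \<Longrightarrow> jj m' \<noteq> j" by metis
      define M0 where "M0 = (\<Sum>j<d. Mj j)"
      have "Mj (jj M0) \<le> M0" unfolding M0_def
        by (rule member_le_sum) (use jjd in auto)
      then show False using Mj[OF jjd] by blast
    qed
    then obtain j where jd: "j < d" and jinf: "\<And>m. \<exists>m'\<ge>m. jj m' = j" by blast
    have "good (e @ [j])" unfolding good_def
    proof (intro allI impI)
      fix m assume m: "max 1 (length (e @ [j])) \<le> m"
      obtain m' where m': "m' \<ge> m" "jj m' = j" using jinf by blast
      let ?e = "E m'"
      have len: "length ?e = m' + max 1 (length e + 1)" using E by blast
      have Qe: "Q ?e" using E by blast
      have tk1: "take (length e) ?e = e" using E by blast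
      have "take (Suc (length e)) ?e = take (length e) ?e @ [?e ! length e]"
        by (rule take_Suc_conv_app_nth) (use len in auto)
      then have t2: "take (Suc (length e)) ?e = e @ [j]" using tk1 m'(2) unfolding jj_def by simp
      show "\<exists>e'. length e' = m \<and> Q e' \<and> take (length (e @ [j])) e' = e @ [j]"
      proof (intro exI conjI)
        show "length (take m ?e) = m" using len m' by auto
        show "Q (take m ?e)" using tk[OF Qe, of m] len m m' by auto
        show "take (length (e @ [j])) (take m ?e) = e @ [j]"
          using t2 m by (simp add: min_def)
      qed
    qed
    then show ?thesis using jd by blast
  qed
  define nxt where "nxt p = (SOME j. j < d \<and> good (p @ [j]))" for p
  have nxt: "nxt p < d \<and> good (p @ [nxt p])" if "good p" for p
    unfolding nxt_def using someI_ex[OF gs[OF that]] .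
  define pre where "pre = rec_nat [] (\<lambda>n p. p @ [nxt p])"
  have pre0: "pre 0 = []" and preS: "pre (Suc n) = pre n @ [nxt (pre n)]" for n
    unfolding pre_def by simp_all
  have pg: "good (pre n) \<and> length (pre n) = n" for n
    by (induction n) (use g0 nxt in \<open>auto simp: pre0 preS\<close>)
  define \<epsilon> where "\<epsilon> n = nxt (pre n)" for n
  have mp: "map \<epsilon> [0..<k] = pre k" for k
    by (induction k) (auto simp: pre0 preS \<epsilon>_def)
  show ?thesis
  proof (intro exI conjI allI impI)
    show "\<epsilon> n < d" for n using nxt pg unfolding \<epsilon>_def by blast
    fix k :: nat assume k: "k \<ge> 1"
    from pg[of k] k obtain e' where "length e' = k" "Q e'" "take k e' = pre k"
      unfolding good_def by force
    then show "Q (map \<epsilon> [0..<k])" using mp by simp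
  qed
qed

lemma foldr_shift:
  fixes P1 P2 :: "nat \<Rightarrow> complex \<Rightarrow> complex"
  assumes "\<And>l z. l \<in> set L \<Longrightarrow> z \<in> disc \<Longrightarrow> P1 (Suc l) z = P2 l z \<and> P2 l z \<in> disc"
    and "z \<in> disc"
  shows "foldr (\<lambda>l h. P1 l \<circ> h) (map Suc L) id z = foldr (\<lambda>l h. P2 l \<circ> h) L id z
     \<and> foldr (\<lambda>l h. P2 l \<circ> h) L id z \<in> disc"
  using assms by (induction L) auto

lemma closure_finite_Union:
  fixes F :: "'a::topological_space set set"
  assumes "finite F" shows "closure (\<Union>F) = \<Union>(closure ` F)"
  using assms by (induction F rule: finite_induct) auto

theorem mainTheorem5:
  fixes U :: "complex set" and Us :: "nat \<Rightarrow> complex set" and N d :: nat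
    and f \<phi> :: "complex \<Rightarrow> complex" and w :: complex and ws :: "nat \<Rightarrow> complex"
    and ii :: "nat \<Rightarrow> nat" and V :: "nat \<Rightarrow> complex set" and g :: "nat \<Rightarrow> complex \<Rightarrow> complex"
    and G :: "nat list \<Rightarrow> nat \<Rightarrow> complex \<Rightarrow> complex"
  defines "U' \<equiv> (\<Union>i<N. Us i)"
  defines "K \<equiv> filled_julia f U'"
  defines "J \<equiv> frontier K"
  assumes U: "conformal_disc U"
    and Us: "\<And>i. i < N \<Longrightarrow> conformal_disc (Us i)"
    and Us_disj: "\<And>i j. i < N \<Longrightarrow> j < N \<Longrightarrow> i \<noteq> j \<Longrightarrow> Us i \<inter> Us j = {}"
    and relcpt: "compact (closure U')" "closure U' \<subseteq> U"
    and f_holo: "f holomorphic_on U'"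
    and f_proper: "proper_map (top_of_set U') (top_of_set U) f"
    and f_deg: "\<exists>degs. (\<forall>i<N. holo_degree f (Us i) U (degs i)) \<and> d = (\<Sum>i<N. degs i)"
    and d_gt: "d > 1"
    and KJ: "K = J"
    and cantor: "cantor_set K"
    and crit: "\<And>z. z \<in> U' \<Longrightarrow> deriv f z = 0 \<Longrightarrow> z \<in> K"
    and w: "w \<in> U - U'"
    and ws_pre: "{z \<in> U'. f z = w} = ws ` {..<d}"
    and ws_inj: "inj_on ws {..<d}"
    and ii: "\<And>j. j < d \<Longrightarrow> ii j < N \<and> ws j \<in> Us (ii j)"
    and phi_holo: "\<phi> holomorphic_on disc"
    and phi_cov: "covering_space disc \<phi> (U - J)"
    and phi0: "\<phi> 0 = w"
    and V: "\<And>i. i < N \<Longrightarrow> V i \<in> components (disc \<inter> \<phi> -` (Us i - J))"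
    and g_holo: "\<And>j. j < d \<Longrightarrow> g j holomorphic_on disc \<and> inj_on (g j) disc"
    and g_lift: "\<And>j z. j < d \<Longrightarrow> z \<in> disc \<Longrightarrow> f (\<phi> (g j z)) = \<phi> z"
    and g0: "\<And>j. j < d \<Longrightarrow> \<phi> (g j 0) = ws j"
    and g_img: "\<And>j. j < d \<Longrightarrow> g j ` disc = V (ii j)"
    and G_deck: "\<And>k e l. k \<ge> 1 \<Longrightarrow> e \<in> blocks d k \<Longrightarrow> 1 \<le> l \<Longrightarrow> l \<le> k \<Longrightarrow> G e l \<in> deck \<phi>"
    and cond1: "\<And>k e. k \<ge> 2 \<Longrightarrow> e \<in> blocks d k \<Longrightarrow> Vblock G g e \<subseteq> Vblock G g (butlast e)"
    and cond2: "\<And>k e l z. k \<ge> 2 \<Longrightarrow> e \<in> blocks d k \<Longrightarrow> 2 \<le> l \<Longrightarrow> l \<le> k \<Longrightarrow> z \<in> disc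
                  \<Longrightarrow> G e l z = G (tl e) (l - 1) z"
    and cond3: "\<And>k e e'. k \<ge> 1 \<Longrightarrow> e \<in> blocks d k \<Longrightarrow> e' \<in> blocks d k
                  \<Longrightarrow> \<phi> ` Vblock G g e = \<phi> ` Vblock G g e' \<Longrightarrow> Vblock G g e = Vblock G g e'"
  shows "J \<subseteq> coding_map \<phi> G g ` seqs d"
proof
  fix z assume zJ: "z \<in> J"
  have JK: "J = K" using KJ by simp
  have openUs: "\<And>i. i < N \<Longrightarrow> open (Us i)" using Us unfolding conformal_disc_def by blast
  have openU': "open U'" unfolding U'_def using openUs by blast
  have UsU': "\<And>i. i < N \<Longrightarrow> Us i \<subseteq> U'" unfolding U'_def by blast
  have KU': "K \<subseteq> U'" unfolding K_def filled_julia_def by auto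
  have tdK: "\<And>C. C \<subseteq> K \<Longrightarrow> connected C \<Longrightarrow> \<exists>a. C \<subseteq> {a}"
    using cantor unfolding cantor_set_def by blast
  have intK: "interior K = {}"
  proof (rule ccontr)
    assume "interior K \<noteq> {}"
    then obtain x where x: "x \<in> interior K" by blast
    then obtain r where r: "r > 0" "ball x r \<subseteq> interior K"
      using open_interior open_contains_ball by blast
    then have "ball x r \<subseteq> K" using interior_subset by blast
    then obtain a where a: "ball x r \<subseteq> {a}" using tdK connected_ball by blast
    have "x \<in> ball x r" using r by simp
    moreover have "x + of_real (r/2) \<in> ball x r" using r by (simp add: dist_norm)
    ultimately have "x = x + of_real (r/2)" using a by blast
    then show False using r by simp
  qed
  have fU: "\<And>x. x \<in> U' \<Longrightarrow> f x \<in> U"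
  proof -
    fix x assume x: "x \<in> U'"
    have "closed_map (top_of_set U') (top_of_set U) f" using f_proper unfolding proper_map_def by blast
    then have "closedin (top_of_set U) (f ` U')" unfolding closed_map_def
      by (metis closedin_topspace topspace_euclidean_subtopology)
    then have "f ` U' \<subseteq> U" using closedin_subset by fastforce
    then show "f x \<in> U" using x by blast
  qed
  have fpow: "\<And>n x. (f ^^ Suc n) x = (f ^^ n) (f x)" by (metis comp_apply funpow_Suc_right)
  have Kf: "\<And>x. x \<in> K \<Longrightarrow> f x \<in> K"
  proof -
    fix x assume "x \<in> K"
    then have hx: "\<And>n. (f ^^ n) x \<in> U'" unfolding K_def filled_julia_def by auto
    have "(f ^^ n) (f x) \<in> U'" for n using hx[of "Suc n"] fpow[of n x] by simp
    moreover have "f x \<in> U'" using hx[of "Suc 0"] by simp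
    ultimately show "f x \<in> K" unfolding K_def filled_julia_def by blast
  qed
  have Kb: "\<And>x. x \<in> U' \<Longrightarrow> f x \<in> K \<Longrightarrow> x \<in> K"
  proof -
    fix x assume x: "x \<in> U'" and fx: "f x \<in> K"
    have "(f ^^ n) x \<in> U'" for n
    proof (cases n)
      case 0 then show ?thesis using x by simp
    next
      case (Suc m)
      have "(f ^^ m) (f x) \<in> U'" using fx unfolding K_def filled_julia_def by blast
      then show ?thesis using fpow[of m x] Suc by simp
    qed
    then show "x \<in> K" using x unfolding K_def filled_julia_def by auto
  qed
  have deckD: "\<And>\<gamma> y. \<gamma> \<in> deck \<phi> \<Longrightarrow> y \<in> disc \<Longrightarrow> \<gamma> y \<in> disc \<and> \<phi> (\<gamma> y) = \<phi> y"
  proof -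
    fix \<gamma> y assume ga: "\<gamma> \<in> deck \<phi>" and y: "y \<in> disc"
    then obtain \<gamma>' where h: "homeomorphism disc disc \<gamma> \<gamma>'" and p: "\<forall>z\<in>disc. \<phi> (\<gamma> z) = \<phi> z"
      unfolding deck_def by blast
    have "\<gamma> ` disc = disc" using homeomorphism_image1[OF h] .
    then show "\<gamma> y \<in> disc \<and> \<phi> (\<gamma> y) = \<phi> y" using y p by blast
  qed
  have deckC: "\<And>\<gamma>. \<gamma> \<in> deck \<phi> \<Longrightarrow> continuous_on disc \<gamma>"
    unfolding deck_def using homeomorphism_cont1 by blast
  have phiC: "continuous_on disc \<phi>" using phi_holo holomorphic_on_imp_continuous_on by blast
  have phiS: "\<phi> ` disc = U - J" using phi_cov covering_space_imp_surjective by blast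
  have gD: "\<And>j y. j < d \<Longrightarrow> y \<in> disc \<Longrightarrow> g j y \<in> disc \<and> \<phi> (g j y) \<in> Us (ii j) \<and> \<phi> (g j y) \<notin> K"
  proof -
    fix j y assume j: "j < d" and y: "y \<in> disc"
    have "g j y \<in> V (ii j)" using g_img[OF j] y by blast
    moreover have "V (ii j) \<subseteq> disc \<inter> \<phi> -` (Us (ii j) - J)"
      using in_components_subset V ii j by blast
    ultimately show "g j y \<in> disc \<and> \<phi> (g j y) \<in> Us (ii j) \<and> \<phi> (g j y) \<notin> K" using JK by blast
  qed
  have gU': "\<And>j y. j < d \<Longrightarrow> y \<in> disc \<Longrightarrow> \<phi> (g j y) \<in> U'"
    using gD UsU' ii by blast
  have gC: "\<And>j. j < d \<Longrightarrow> continuous_on disc (g j)"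
    using g_holo holomorphic_on_imp_continuous_on by blast
  have pgC: "\<And>j. j < d \<Longrightarrow> continuous_on disc (\<lambda>y. \<phi> (g j y))"
    by (rule continuous_on_compose2[OF phiC gC]) (use gD in auto)
  have blocksC: "\<And>x t n. x # t \<in> blocks d (Suc n) \<longleftrightarrow> x < d \<and> t \<in> blocks d n"
    by (auto simp: blocks_def)
  have bm_nil: "block_map G g [] = id" by (simp add: block_map_def)
  have BM: "\<And>x t y. x # t \<in> blocks d (Suc (length t)) \<Longrightarrow> y \<in> disc \<Longrightarrow>
      block_map G g (x#t) y = G (x#t) 1 (g x (block_map G g t y)) \<and> block_map G g t y \<in> disc"
  proof -
    fix x t y assume e: "x # t \<in> blocks d (Suc (length t))" and y: "y \<in> disc"
    define n where "n = length t"
    define e where "e = x # t"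
    define P1 where "P1 l = G e l \<circ> g (e ! (l - 1))" for l
    define P2 where "P2 l = G t l \<circ> g (t ! (l - 1))" for l
    have t: "t \<in> blocks d n" and xd: "x < d" using e blocksC n_def by auto
    have bme: "block_map G g e = foldr (\<lambda>l h. P1 l \<circ> h) (1 # map Suc [1..<Suc n]) id"
    proof -
      have ul: "[1..<Suc (length e)] = 1 # map Suc [1..<Suc n]"
        by (simp add: e_def n_def map_Suc_upt upt_conv_Cons del: upt_Suc)
      show ?thesis by (simp only: block_map_def P1_def ul)
    qed
    have bmt: "block_map G g t = foldr (\<lambda>l h. P2 l \<circ> h) [1..<Suc n] id"
      by (simp only: block_map_def P2_def n_def)
    have key: "P1 (Suc l) w = P2 l w \<and> P2 l w \<in> disc" if l: "l \<in> set [1..<Suc n]" and w: "w \<in> disc" for l w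
    proof -
      have l1: "1 \<le> l" "l \<le> n" using l by auto
      have tl: "t ! (l - 1) < d" using t l1 unfolding blocks_def by auto
      have enth: "e ! (Suc l - 1) = t ! (l - 1)" unfolding e_def using l1 by (cases l) auto
      have gw: "g (t ! (l - 1)) w \<in> disc" using gD[OF tl w] by blast
      have "G e (Suc l) (g (t ! (l - 1)) w) = G (tl e) (Suc l - 1) (g (t ! (l - 1)) w)"
        by (rule cond2[of "Suc n"]) (use e l1 gw in \<open>auto simp: e_def n_def\<close>)
      then have 1: "P1 (Suc l) w = P2 l w" unfolding P1_def P2_def using enth by (simp add: e_def)
      have "G t l \<in> deck \<phi>" by (rule G_deck[OF _ t]) (use l1 in auto)
      then have "P2 l w \<in> disc" unfolding P2_def using deckD gw by simp
      then show ?thesis using 1 by blast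
    qed
    have fs: "foldr (\<lambda>l h. P1 l \<circ> h) (map Suc [1..<Suc n]) id y = foldr (\<lambda>l h. P2 l \<circ> h) [1..<Suc n] id y
       \<and> foldr (\<lambda>l h. P2 l \<circ> h) [1..<Suc n] id y \<in> disc"
      by (rule foldr_shift) (use key y in auto)
    show "block_map G g (x#t) y = G (x#t) 1 (g x (block_map G g t y)) \<and> block_map G g t y \<in> disc"
      using fs unfolding e_def[symmetric] bme bmt by (simp add: P1_def e_def)
  qed
  have bm_disc: "\<And>e y. e \<in> blocks d (length e) \<Longrightarrow> y \<in> disc \<Longrightarrow> block_map G g e y \<in> disc"
  proof -
    fix e y assume e: "e \<in> blocks d (length e)" and y: "y \<in> disc"
    show "block_map G g e y \<in> disc"
    proof (cases e)
      case Nil then show ?thesis using y bm_nil by simp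
    next
      case (Cons x t)
      have e': "x # t \<in> blocks d (Suc (length t))" using e Cons by simp
      have xd: "x < d" using e' blocksC by blast
      have b: "block_map G g (x#t) y = G (x#t) 1 (g x (block_map G g t y))" "block_map G g t y \<in> disc"
        using BM[OF e' y] by auto
      have "G (x#t) 1 \<in> deck \<phi>" by (rule G_deck[OF _ e']) auto
      then show ?thesis using b deckD gD[OF xd b(2)] Cons by simp
    qed
  qed
  have phi_bm: "\<And>x t y. x # t \<in> blocks d (Suc (length t)) \<Longrightarrow> y \<in> disc \<Longrightarrow>
       \<phi> (block_map G g (x#t) y) = \<phi> (g x (block_map G g t y))"
  proof -
    fix x t y assume e': "x # t \<in> blocks d (Suc (length t))" and y: "y \<in> disc"
    have xd: "x < d" using e' blocksC by blast
    have b: "block_map G g (x#t) y = G (x#t) 1 (g x (block_map G g t y))" "block_map G g t y \<in> disc"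
      using BM[OF e' y] by auto
    have "G (x#t) 1 \<in> deck \<phi>" by (rule G_deck[OF _ e']) auto
    then show "\<phi> (block_map G g (x#t) y) = \<phi> (g x (block_map G g t y))"
      using b deckD gD[OF xd b(2)] by simp
  qed
  have bm_cont: "\<And>e. e \<in> blocks d (length e) \<Longrightarrow> continuous_on disc (block_map G g e)"
  proof -
    fix e show "e \<in> blocks d (length e) \<Longrightarrow> continuous_on disc (block_map G g e)"
    proof (induction e)
      case Nil then show ?case using bm_nil by (simp add: continuous_on_id)
    next
      case (Cons x t)
      have e': "x # t \<in> blocks d (Suc (length t))" using Cons.prems by simp
      have xd: "x < d" and t: "t \<in> blocks d (length t)" using e' blocksC by auto
      have ct: "continuous_on disc (block_map G g t)" using Cons.IH t by blast
      have c1: "continuous_on disc (\<lambda>y. g x (block_map G g t y))"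
        by (rule continuous_on_compose2[OF gC[OF xd] ct]) (use bm_disc t in auto)
      have Gd: "G (x#t) 1 \<in> deck \<phi>" by (rule G_deck[OF _ e']) auto
      have c2: "continuous_on disc (\<lambda>y. G (x#t) 1 (g x (block_map G g t y)))"
        by (rule continuous_on_compose2[OF deckC[OF Gd] c1]) (use bm_disc t gD xd in auto)
      show ?case
        by (rule continuous_on_cong[THEN iffD1, OF refl _ c2]) (use BM e' in auto)
    qed
  qed
  have distinct: "\<And>j j' y. j < d \<Longrightarrow> j' < d \<Longrightarrow> j \<noteq> j' \<Longrightarrow> y \<in> disc \<Longrightarrow> \<phi> (g j y) \<noteq> \<phi> (g j' y)"
  proof -
    fix j j' y assume j: "j < d" and j': "j' < d" and jj: "j \<noteq> j'" and y: "y \<in> disc"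
    define E where "E = {y \<in> disc. \<phi> (g j y) - \<phi> (g j' y) = 0}"
    have cE: "continuous_on disc (\<lambda>y. \<phi> (g j y) - \<phi> (g j' y))"
      using pgC[OF j] pgC[OF j'] by (intro continuous_on_diff)
    have clE: "closedin (top_of_set disc) E"
      unfolding E_def by (rule continuous_closedin_preimage_constant[OF cE])
    have opE: "openin (top_of_set disc) E"
    proof (subst openin_subopen, intro ballI)
      fix y0 assume y0: "y0 \<in> E"
      then have y0d: "y0 \<in> disc" and eq0: "\<phi> (g j y0) = \<phi> (g j' y0)" unfolding E_def by auto
      define p where "p = \<phi> (g j y0)"
      have pU: "p \<in> U'" and pK: "p \<notin> K" using gU'[OF j y0d] gD[OF j y0d] unfolding p_def by auto
      have "deriv f p \<noteq> 0" using crit pU pK by blast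
      then obtain r where r: "r > 0" "ball p r \<subseteq> U'" "inj_on f (ball p r)"
        using has_complex_derivative_locally_injective[OF f_holo pU openU'] by blast
      obtain d1 where d1: "d1 > 0" "\<And>y'. y' \<in> disc \<Longrightarrow> dist y' y0 < d1 \<Longrightarrow> dist (\<phi> (g j y')) (\<phi> (g j y0)) < r"
        using pgC[OF j] y0d r(1) unfolding continuous_on_iff by metis
      obtain d2 where d2: "d2 > 0" "\<And>y'. y' \<in> disc \<Longrightarrow> dist y' y0 < d2 \<Longrightarrow> dist (\<phi> (g j' y')) (\<phi> (g j' y0)) < r"
        using pgC[OF j'] y0d r(1) unfolding continuous_on_iff by metis
      define T where "T = disc \<inter> ball y0 (min d1 d2)"
      have "openin (top_of_set disc) T" unfolding T_def by (rule openin_open_Int) simp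
      moreover have "y0 \<in> T" unfolding T_def using y0d d1 d2 by simp
      moreover have "T \<subseteq> E"
      proof
        fix y' assume y': "y' \<in> T"
        then have y'd: "y' \<in> disc" and dd: "dist y' y0 < d1" "dist y' y0 < d2"
          unfolding T_def by (auto simp: dist_commute)
        have a: "\<phi> (g j y') \<in> ball p r" using d1(2)[OF y'd dd(1)] unfolding p_def by (simp add: dist_commute)
        have b: "\<phi> (g j' y') \<in> ball p r" using d2(2)[OF y'd dd(2)] eq0 unfolding p_def by (simp add: dist_commute)
        have "f (\<phi> (g j y')) = f (\<phi> (g j' y'))" using g_lift[OF j y'd] g_lift[OF j' y'd] by simp
        then have "\<phi> (g j y') = \<phi> (g j' y')" using r(3) a b by (meson inj_onD)
        then show "y' \<in> E" unfolding E_def using y'd by simp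
      qed
      ultimately show "\<exists>T. openin (top_of_set disc) T \<and> y0 \<in> T \<and> T \<subseteq> E" by blast
    qed
    have "E = {} \<or> E = disc"
      using connected_clopen[THEN iffD1, OF convex_connected[OF convex_ball]] opE clE by blast
    moreover have "0 \<notin> E"
    proof
      assume "0 \<in> E"
      then have "ws j = ws j'" using g0[OF j] g0[OF j'] unfolding E_def by simp
      then show False using ws_inj j j' jj by (meson inj_onD lessThan_iff)
    qed
    ultimately have "E = {}" by auto
    then show "\<phi> (g j y) \<noteq> \<phi> (g j' y)" using y unfolding E_def by auto
  qed
  have cardpre: "\<And>q. q \<in> U \<Longrightarrow> q \<notin> K \<Longrightarrow> finite {x \<in> U'. f x = q} \<and> card {x \<in> U'. f x = q} \<le> d"
  proof -
    fix q assume qU: "q \<in> U" and qK: "q \<notin> K"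
    obtain degs where degs: "\<And>i. i < N \<Longrightarrow> holo_degree f (Us i) U (degs i)" and dsum: "d = (\<Sum>i<N. degs i)"
      using f_deg by blast
    define P where "P i = {x \<in> Us i. f x = q}" for i
    have zpos: "zorder (\<lambda>x. f x - q) x \<ge> 1" if xU: "x \<in> U'" and fx: "f x = q" for x
    proof -
      have xK: "x \<notin> K" using Kf fx qK by blast
      have "deriv f x \<noteq> 0" using crit xU xK by blast
      then obtain r where r: "r > 0" "ball x r \<subseteq> U'" "inj_on f (ball x r)"
        using has_complex_derivative_locally_injective[OF f_holo xU openU'] by blast
      have ev: "\<forall>\<^sub>F y in at x. f y - q \<noteq> 0"
        unfolding eventually_at
      proof (intro exI[of _ r] conjI ballI impI)
        show "r > 0" using r by simp
        fix y assume "y \<in> UNIV" "y \<noteq> x \<and> dist y x < r"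
        then have "y \<in> ball x r" "y \<noteq> x" by (auto simp: dist_commute)
        then have "f y \<noteq> f x" using r(3) \<open>r > 0\<close> by (meson centre_in_ball inj_onD)
        then show "f y - q \<noteq> 0" using fx by simp
      qed
      have fr: "\<exists>\<^sub>F y in at x. f y - q \<noteq> 0"
        using ev by (simp add: eventually_frequently)
      have "zorder (\<lambda>x. f x - q) x > 0 \<longleftrightarrow> f x - q = 0"
        by (rule zorder_pos_iff[OF _ openU' xU fr]) (use f_holo in \<open>intro holomorphic_intros\<close>)
      then show ?thesis using fx by simp
    qed
    have Pi: "finite (P i) \<and> card (P i) \<le> degs i" if i: "i < N" for i
    proof -
      have h: "finite (P i)" "(\<Sum>x\<in>P i. zorder (\<lambda>y. f y - q) x) = int (degs i)"
        using degs[OF i] qU unfolding holo_degree_def P_def by auto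
      have "of_nat (card (P i)) * (1::int) \<le> (\<Sum>x\<in>P i. zorder (\<lambda>y. f y - q) x)"
        by (rule sum_bounded_below) (use zpos UsU' i in \<open>auto simp: P_def\<close>)
      then show ?thesis using h by simp
    qed
    have eq: "{x \<in> U'. f x = q} = (\<Union>i<N. P i)" unfolding U'_def P_def by auto
    have fin: "finite {x \<in> U'. f x = q}" unfolding eq using Pi by auto
    have "card (\<Union>i<N. P i) \<le> (\<Sum>i<N. card (P i))" by (rule card_UN_le) simp
    also have "\<dots> \<le> (\<Sum>i<N. degs i)" by (rule sum_mono) (use Pi in auto)
    finally show "finite {x \<in> U'. f x = q} \<and> card {x \<in> U'. f x = q} \<le> d" using fin eq dsum by simp
  qed
  have PRE: "\<And>x y. y \<in> disc \<Longrightarrow> x \<in> U' \<Longrightarrow> f x = \<phi> y \<Longrightarrow> \<exists>j<d. x = \<phi> (g j y)"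
  proof -
    fix x y assume y: "y \<in> disc" and xU: "x \<in> U'" and fx: "f x = \<phi> y"
    have q: "\<phi> y \<in> U" "\<phi> y \<notin> K" using phiS y JK by auto
    define S where "S = {x \<in> U'. f x = \<phi> y}"
    define I where "I = (\<lambda>j. \<phi> (g j y)) ` {..<d}"
    have IS: "I \<subseteq> S" unfolding I_def S_def using gU' g_lift y by auto
    have cI: "card I = d" unfolding I_def
      by (subst card_image) (use distinct y in \<open>auto intro!: inj_onI\<close>)
    have "finite S" "card S \<le> d" using cardpre[OF q] unfolding S_def by auto
    then have "I = S" using IS cI by (metis card_seteq)
    then show "\<exists>j<d. x = \<phi> (g j y)" using xU fx unfolding S_def I_def by auto
  qed
  have cover: "\<And>n x. x \<notin> K \<Longrightarrow> (\<forall>l<Suc n. (f ^^ l) x \<in> U') \<Longrightarrow>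
      \<exists>e\<in>blocks d (Suc n). \<exists>y\<in>disc. x = \<phi> (block_map G g e y)"
  proof -
    fix n show "\<And>x. x \<notin> K \<Longrightarrow> (\<forall>l<Suc n. (f ^^ l) x \<in> U') \<Longrightarrow>
      \<exists>e\<in>blocks d (Suc n). \<exists>y\<in>disc. x = \<phi> (block_map G g e y)"
    proof (induction n)
      case 0
      have xU: "x \<in> U'" using 0(2)[rule_format, of 0] by simp
      have "f x \<notin> K" using Kb xU 0(1) by blast
      then have "f x \<in> \<phi> ` disc" using phiS fU[OF xU] JK by blast
      then obtain y where y: "y \<in> disc" "f x = \<phi> y" by blast
      obtain j where j: "j < d" "x = \<phi> (g j y)" using PRE[OF y(1) xU y(2)] by blast
      have e: "[j] \<in> blocks d (Suc (length ([]::nat list)))" using j by (simp add: blocks_def)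
      have "\<phi> (block_map G g [j] y) = x" using phi_bm[OF e y(1)] j bm_nil by simp
      then show ?case using e y(1) by force
    next
      case (Suc n)
      have xU: "x \<in> U'" using Suc.prems(2)[rule_format, of 0] by simp
      have fxK: "f x \<notin> K" using Kb xU Suc.prems(1) by blast
      have "\<forall>l<Suc n. (f ^^ l) (f x) \<in> U'" using Suc.prems(2) fpow by (metis Suc_less_eq)
      then obtain e' y where e': "e' \<in> blocks d (Suc n)" and y: "y \<in> disc" and fx: "f x = \<phi> (block_map G g e' y)"
        using Suc.IH[OF fxK] by blast
      have e'l: "e' \<in> blocks d (length e')" using e' by (simp add: blocks_def)
      have y': "block_map G g e' y \<in> disc" using bm_disc[OF e'l y] .
      obtain j where j: "j < d" "x = \<phi> (g j (block_map G g e' y))" using PRE[OF y' xU fx] by blast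
      have e: "j # e' \<in> blocks d (Suc (length e'))" using j e' by (simp add: blocks_def)
      have "\<phi> (block_map G g (j # e') y) = x" using phi_bm[OF e y] j by simp
      moreover have "j # e' \<in> blocks d (Suc (Suc n))" using e e' by (simp add: blocks_def)
      ultimately show ?case using y by force
    qed
  qed
  have zK: "z \<in> K" using zJ JK by simp
  have finbl: "\<And>k. finite (blocks d k)"
  proof -
    fix k have "blocks d k = {xs. set xs \<subseteq> {..<d} \<and> length xs = k}" by (auto simp: blocks_def)
    then show "finite (blocks d k)" using finite_lists_length_eq[of "{..<d}" k] by simp
  qed
  have density: "\<And>n. \<exists>e\<in>blocks d (Suc n). z \<in> closure (\<phi> ` Vblock G g e)"
  proof -
    fix n
    define W where "W k = {x. \<forall>l<k. (f ^^ l) x \<in> U'}" for k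
    have Wopen: "open (W k)" for k
    proof (induction k)
      case 0 then show ?case by (simp add: W_def)
    next
      case (Suc k)
      have "W (Suc k) = U' \<inter> f -` W k"
        unfolding W_def by (auto simp: less_Suc_eq_0_disj fpow funpow_0 simp del: funpow.simps)
      moreover have "continuous_on U' f" using f_holo holomorphic_on_imp_continuous_on by blast
      ultimately show ?case using continuous_on_open_vimage[OF openU', of f] Suc.IH by (simp add: Int_commute)
    qed
    have zW: "z \<in> W (Suc n)" using zK unfolding W_def K_def filled_julia_def by auto
    have "closure (-K) = UNIV" using intK by (simp add: closure_interior)
    then have "z \<in> closure (W (Suc n) \<inter> -K)"
      using open_Int_closure_subset[OF Wopen, of "Suc n" "-K"] zW by blast
    moreover have "W (Suc n) \<inter> -K \<subseteq> \<Union>((\<lambda>e. \<phi> ` Vblock G g e) ` blocks d (Suc n))"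
    proof
      fix x assume "x \<in> W (Suc n) \<inter> -K"
      then obtain e y where "e \<in> blocks d (Suc n)" "y \<in> disc" "x = \<phi> (block_map G g e y)"
        using cover[of x n] unfolding W_def by blast
      then show "x \<in> \<Union>((\<lambda>e. \<phi> ` Vblock G g e) ` blocks d (Suc n))" unfolding Vblock_def by blast
    qed
    ultimately have "z \<in> closure (\<Union>((\<lambda>e. \<phi> ` Vblock G g e) ` blocks d (Suc n)))"
      using closure_mono by blast
    then show "\<exists>e\<in>blocks d (Suc n). z \<in> closure (\<phi> ` Vblock G g e)"
      by (subst (asm) closure_finite_Union) (use finbl in auto)
  qed
  define Q where "Q e \<longleftrightarrow> e \<in> blocks d (length e) \<and> z \<in> closure (\<phi> ` Vblock G g e)" for e
  have Qbut: "\<And>e. Q e \<Longrightarrow> length e \<ge> 2 \<Longrightarrow> Q (butlast e)"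
  proof -
    fix e assume Qe: "Q e" and l: "length e \<ge> 2"
    have eb: "e \<in> blocks d (length e)" using Qe Q_def by blast
    have "Vblock G g e \<subseteq> Vblock G g (butlast e)" using cond1[OF l eb] .
    then have "z \<in> closure (\<phi> ` Vblock G g (butlast e))"
      using Qe unfolding Q_def by (meson closure_mono image_mono subsetD)
    moreover have "butlast e \<in> blocks d (length (butlast e))"
      using eb by (auto simp: blocks_def dest: in_set_butlastD)
    ultimately show "Q (butlast e)" unfolding Q_def by blast
  qed
  have Qtake: "\<And>e m. Q e \<Longrightarrow> 1 \<le> m \<Longrightarrow> m \<le> length e \<Longrightarrow> Q (take m e)"
  proof -
    have "\<forall>e. length e = m + i \<longrightarrow> Q e \<longrightarrow> 1 \<le> m \<longrightarrow> Q (take m e)" for i m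
    proof (induction i)
      case 0 then show ?case by simp
    next
      case (Suc i)
      show ?case
      proof (intro allI impI)
        fix e assume l: "length e = m + Suc i" and Qe: "Q e" and m: "1 \<le> m"
        have "Q (butlast e)" using Qbut[OF Qe] l m by simp
        moreover have "length (butlast e) = m + i" using l by simp
        ultimately have "Q (take m (butlast e))" using Suc.IH m by blast
        moreover have "take m (butlast e) = take m e" using l by (simp add: butlast_conv_take min_def)
        ultimately show "Q (take m e)" by simp
      qed
    qed
    then show "\<And>e m. Q e \<Longrightarrow> 1 \<le> m \<Longrightarrow> m \<le> length e \<Longrightarrow> Q (take m e)"
      by (metis le_add_diff_inverse)
  qed
  have Qex: "\<And>k. k \<ge> 1 \<Longrightarrow> \<exists>e. length e = k \<and> Q e"
  proof -
    fix k :: nat assume "k \<ge> 1"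
    then obtain n where n: "k = Suc n" by (metis Suc_pred' less_le_trans zero_less_one)
    obtain e where "e \<in> blocks d (Suc n)" "z \<in> closure (\<phi> ` Vblock G g e)" using density by blast
    then show "\<exists>e. length e = k \<and> Q e" unfolding Q_def using n by (auto simp: blocks_def)
  qed
  have Qset: "\<And>e. Q e \<Longrightarrow> set e \<subseteq> {..<d}" unfolding Q_def blocks_def by auto
  obtain \<epsilon> where \<epsilon>d: "\<And>n. \<epsilon> n < d" and \<epsilon>Q: "\<And>k. k \<ge> 1 \<Longrightarrow> Q (map \<epsilon> [0..<k])"
    using koenig[of Q d, OF Qex Qtake Qset] by blast
  have \<epsilon>s: "\<epsilon> \<in> seqs d" using \<epsilon>d by (simp add: seqs_def)
  define T where "T k = closure (\<phi> ` Vblock G g (prefix_block \<epsilon> k))" for k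
  define I where "I = (\<Inter>k\<in>{1..}. T k)"
  have zI: "z \<in> I" unfolding I_def T_def using \<epsilon>Q unfolding Q_def prefix_block_def by auto
  have pb: "\<And>k. prefix_block \<epsilon> k \<in> blocks d k" using \<epsilon>d by (auto simp: prefix_block_def blocks_def)
  have pbl: "\<And>k. length (prefix_block \<epsilon> k) = k" by (simp add: prefix_block_def)
  define B where "B m = {x. (\<forall>l<m. (f ^^ l) x \<in> U') \<and> (f ^^ m) x \<in> closure U'}" for m
  have BS: "B (Suc m) = {x \<in> U'. f x \<in> B m}" for m
    unfolding B_def by (auto simp: less_Suc_eq_0_disj fpow funpow_0 simp del: funpow.simps)
  have U'U: "U' \<subseteq> U" using relcpt(2) closure_subset by blast
  have Bc: "compact (B m) \<and> B m \<subseteq> U" for m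
  proof (induction m)
    case 0 then show ?case using relcpt by (simp add: B_def)
  next
    case (Suc m)
    have "compactin (top_of_set U) (B m)" using Suc.IH by (simp add: compactin_subtopology)
    then have "compactin (top_of_set U') {x. x \<in> topspace (top_of_set U') \<and> f x \<in> B m}"
      using f_proper unfolding proper_map_alt by blast
    then have "compact {x \<in> U'. f x \<in> B m}" by (simp add: compactin_subtopology)
    then show ?case unfolding BS using U'U by blast
  qed
  have iter: "\<And>e y l. e \<in> blocks d (length e) \<Longrightarrow> y \<in> disc \<Longrightarrow> l \<le> length e \<Longrightarrow>
       (f ^^ l) (\<phi> (block_map G g e y)) = \<phi> (block_map G g (drop l e) y)"
  proof -
    fix e y l assume e: "e \<in> blocks d (length e)" and y: "y \<in> disc"
    show "l \<le> length e \<Longrightarrow> (f ^^ l) (\<phi> (block_map G g e y)) = \<phi> (block_map G g (drop l e) y)"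
    proof (induction l)
      case 0 then show ?case by simp
    next
      case (Suc l)
      have ll: "l < length e" using Suc.prems by simp
      have dr: "drop l e = e ! l # drop (Suc l) e" using Cons_nth_drop_Suc[OF ll] by simp
      have eb: "e ! l # drop (Suc l) e \<in> blocks d (Suc (length (drop (Suc l) e)))"
        using e ll by (auto simp: blocks_def dest: in_set_dropD)
      have el: "e ! l < d" using e ll by (auto simp: blocks_def)
      have tb: "drop (Suc l) e \<in> blocks d (length (drop (Suc l) e))"
        using e by (auto simp: blocks_def dest: in_set_dropD)
      have "(f ^^ Suc l) (\<phi> (block_map G g e y)) = f (\<phi> (block_map G g (drop l e) y))"
        using Suc.IH ll by simp
      also have "\<dots> = f (\<phi> (g (e ! l) (block_map G g (drop (Suc l) e) y)))"
        unfolding dr using phi_bm[OF eb y] by simp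
      also have "\<dots> = \<phi> (block_map G g (drop (Suc l) e) y)"
        using g_lift[OF el bm_disc[OF tb y]] .
      finally show ?case .
    qed
  qed
  have inU: "\<And>e y l. e \<in> blocks d (length e) \<Longrightarrow> y \<in> disc \<Longrightarrow> l < length e \<Longrightarrow>
       (f ^^ l) (\<phi> (block_map G g e y)) \<in> U'"
  proof -
    fix e y l assume e: "e \<in> blocks d (length e)" and y: "y \<in> disc" and ll: "l < length e"
    have dr: "drop l e = e ! l # drop (Suc l) e" using Cons_nth_drop_Suc[OF ll] by simp
    have eb: "e ! l # drop (Suc l) e \<in> blocks d (Suc (length (drop (Suc l) e)))"
      using e ll by (auto simp: blocks_def dest: in_set_dropD)
    have el: "e ! l < d" using e ll by (auto simp: blocks_def)
    have tb: "drop (Suc l) e \<in> blocks d (length (drop (Suc l) e))"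
      using e by (auto simp: blocks_def dest: in_set_dropD)
    have "(f ^^ l) (\<phi> (block_map G g e y)) = \<phi> (g (e ! l) (block_map G g (drop (Suc l) e) y))"
      using iter[OF e y] ll phi_bm[OF eb y] dr by simp
    then show "(f ^^ l) (\<phi> (block_map G g e y)) \<in> U'" using gU'[OF el bm_disc[OF tb y]] by simp
  qed
  have VB: "\<And>e. e \<in> blocks d (length e) \<Longrightarrow> length e \<ge> 1 \<Longrightarrow> \<phi> ` Vblock G g e \<subseteq> B (length e - 1)"
  proof
    fix e x assume e: "e \<in> blocks d (length e)" and l: "length e \<ge> 1" and x: "x \<in> \<phi> ` Vblock G g e"
    then obtain y where y: "y \<in> disc" "x = \<phi> (block_map G g e y)" unfolding Vblock_def by blast
    have "(f ^^ (length e - 1)) x \<in> U'" using inU[OF e y(1)] l y(2) by simp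
    then show "x \<in> B (length e - 1)" unfolding B_def using inU[OF e y(1)] y(2) closure_subset by auto
  qed
  have TB: "T (Suc m) \<subseteq> B m" for m
  proof -
    have "prefix_block \<epsilon> (Suc m) \<in> blocks d (length (prefix_block \<epsilon> (Suc m)))"
      using pb[of "Suc m"] pbl by simp
    then have "\<phi> ` Vblock G g (prefix_block \<epsilon> (Suc m)) \<subseteq> B m"
      using VB pbl by (metis diff_Suc_1 le_add1 plus_1_eq_Suc)
    then show ?thesis unfolding T_def
      using Bc by (meson closure_minimal compact_imp_closed)
  qed
  have IK: "I \<subseteq> K"
  proof
    fix x assume x: "x \<in> I"
    have xB: "x \<in> B m" for m using x TB unfolding I_def by auto
    have "x \<in> U'" using xB[of 1] by (simp add: B_def)
    moreover have "(f ^^ n) x \<in> U'" for n using xB[of "Suc n"] by (simp add: B_def)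
    ultimately show "x \<in> K" unfolding K_def filled_julia_def by blast
  qed
  have Icon: "connected I"
  proof -
    define S where "S n = T (Suc n)" for n
    have Sc: "compact (S n)" for n
    proof -
      have "closed (T (Suc n))" unfolding T_def by simp
      then have "compact (B n \<inter> T (Suc n))" using Bc[of n] by (intro compact_Int_closed) auto
      moreover have "B n \<inter> T (Suc n) = T (Suc n)" using TB[of n] by blast
      ultimately show ?thesis unfolding S_def by simp
    qed
    have Sconn: "connected (S n)" for n
    proof -
      let ?e = "prefix_block \<epsilon> (Suc n)"
      have eb: "?e \<in> blocks d (length ?e)" using pb[of "Suc n"] pbl by simp
      have "continuous_on disc (\<lambda>y. \<phi> (block_map G g ?e y))"
        by (rule continuous_on_compose2[OF phiC bm_cont[OF eb]]) (use bm_disc eb in auto)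
      then have "connected ((\<lambda>y. \<phi> (block_map G g ?e y)) ` disc)"
        by (rule connected_continuous_image) (rule convex_connected, rule convex_ball)
      moreover have "(\<lambda>y. \<phi> (block_map G g ?e y)) ` disc = \<phi> ` Vblock G g ?e"
        unfolding Vblock_def by auto
      ultimately show ?thesis unfolding S_def T_def by (simp add: connected_imp_connected_closure)
    qed
    have Sstep: "S (Suc n) \<subseteq> S n" for n
    proof -
      have e2: "prefix_block \<epsilon> (Suc (Suc n)) \<in> blocks d (Suc (Suc n))" using pb .
      have bl: "butlast (prefix_block \<epsilon> (Suc (Suc n))) = prefix_block \<epsilon> (Suc n)"
      proof -
        have m: "map \<epsilon> [0..<Suc (Suc n)] = map \<epsilon> [0..<Suc n] @ [\<epsilon> (Suc n)]" by simp
        show ?thesis by (simp only: prefix_block_def m butlast_snoc)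
      qed
      have "Vblock G g (prefix_block \<epsilon> (Suc (Suc n))) \<subseteq> Vblock G g (prefix_block \<epsilon> (Suc n))"
        using cond1[OF _ e2] bl by simp
      then show ?thesis unfolding S_def T_def by (simp add: closure_mono image_mono)
    qed
    have Snest: "m \<le> n \<Longrightarrow> S n \<subseteq> S m" for m n
      by (rule lift_Suc_antimono_le[of S]) (use Sstep in auto)
    have "connected (\<Inter>(range S))" by (rule connected_nest) (use Sc Sconn Snest in auto)
    moreover have "\<Inter>(range S) = I"
    proof -
      have "{1..} = range Suc"
      proof (intro set_eqI iffI)
        fix x :: nat assume "x \<in> {1..}"
        then have "x = Suc (x - 1)" by simp
        then show "x \<in> range Suc" by blast
      qed auto
      then show ?thesis unfolding I_def S_def by (simp add: image_image)
    qed
    ultimately show ?thesis by simp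
  qed
  obtain a where a: "I \<subseteq> {a}" using tdK[OF IK Icon] by blast
  have "coding_map \<phi> G g \<epsilon> = z"
    unfolding coding_map_def
  proof (rule the_equality)
    show "z \<in> (\<Inter>k\<in>{1..}. closure (\<phi> ` Vblock G g (prefix_block \<epsilon> k)))"
      using zI unfolding I_def T_def .
    fix x assume "x \<in> (\<Inter>k\<in>{1..}. closure (\<phi> ` Vblock G g (prefix_block \<epsilon> k)))"
    then have "x \<in> I" unfolding I_def T_def .
    then show "x = z" using a zI by blast
  qed
  then show "z \<in> coding_map \<phi> G g ` seqs d" using \<epsilon>s by force
qed

end
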